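(* Let $d\geq 2$ and $n\geq 1$ be integers, let $k$ be an integer with $0\leq k\leq\lfloor\log_d n\rfloor$, and let $\mathbf d=(1,d,d^2,\ldots,d^k)$. Let $\mathbf p_{\mathbf d,d}(n)$ denote the number of integer tuples $(x_0,\ldots,x_k)$ with $\sum_{i=0}^k d^ix_i=n$, $x_i\geq 0$ and $x_i\equiv 0$ or $x_i\equiv 1\pmod d$ for all $i$. Then $$\mathbf p_{\mathbf d,d}(n)=\frac{1}{k!}\sum_{\substack{\varepsilon\in\{0,1\}^{k+1},\ 0\leq j_i\leq d^{k-i}-1,\ 0\leq i\leq k-1\\ \sum_{i=0}^{k-1}d^{i+1}j_i+\sum_{i=0}^k d^i\varepsilon_i\equiv n\pmod{d^{k+1}}}}\ \prod_{\ell=1}^{k}\left(\frac{n-\sum_{i=0}^{k-1}d^{i+1}j_i-\sum_{i=0}^k d^i\varepsilon_i}{d^{k+1}}+\ell\right),$$ where $\varepsilon=(\varepsilon_0,\ldots,\varepsilon_k)$. Moreover, the polynomial part of $\mathbf p_{\mathbf d,d}$ is $$P_{\mathbf d,d}(n)=\frac{1}{k!\,d^{k+1}}\sum_{\varepsilon\in\{0,1\}^{k+1},\ 0\leq j_i\leq d^{k-i}-1,\ 0\leq i\leq k-1}\ \prod_{\ell=1}^{k}\left(\frac{n-\sum_{i=0}^{k-1}d^{i+1}j_i-\sum_{i=0}^k d^i\varepsilon_i}{d^{k+1}}+\ell\right).$$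
   Context: The polynomial part $P_{\mathbf d,d}(n)$ of $\mathbf p_{\mathbf d,d}$ is the polynomial in $n$ given by the coefficient of $t^{-1}$ in the Laurent expansion at $t=0$ of $e^{nt}\prod_{i=0}^k\dfrac{1+e^{-d^it}}{1-e^{-d^{i+1}t}}$. *)

theory Defs
  imports "HOL-Complex_Analysis.Complex_Analysis"
begin

definition pdd :: "nat \<Rightarrow> nat \<Rightarrow> nat \<Rightarrow> nat" where
  "pdd d k n = card {x :: nat \<Rightarrow> nat. (\<forall>i>k. x i = 0) \<and>
      (\<Sum>i\<le>k. d ^ i * x i) = n \<and> (\<forall>i\<le>k. x i mod d = 0 \<or> x i mod d = 1)}"

definition idx :: "nat \<Rightarrow> nat \<Rightarrow> ((nat \<Rightarrow> nat) \<times> (nat \<Rightarrow> nat)) set" where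
  "idx d k = (PiE {..k} (\<lambda>_. {0,1})) \<times> (PiE {..<k} (\<lambda>i. {0..d ^ (k - i) - 1}))"

definition shift :: "nat \<Rightarrow> nat \<Rightarrow> (nat \<Rightarrow> nat) \<Rightarrow> (nat \<Rightarrow> nat) \<Rightarrow> nat" where
  "shift d k e j = (\<Sum>i<k. d ^ (i + 1) * j i) + (\<Sum>i\<le>k. d ^ i * e i)"

definition gen_fun :: "nat \<Rightarrow> nat \<Rightarrow> complex \<Rightarrow> complex \<Rightarrow> complex" where
  "gen_fun d k z t = exp (z * t) *
     (\<Prod>i\<le>k. (1 + exp (- (of_nat (d ^ i)) * t)) / (1 - exp (- (of_nat (d ^ (i + 1))) * t)))"

text \<open>Polynomial part: coefficient of t^{-1} in the Laurent expansion at 0, i.e. the residue at 0.\<close>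
definition poly_part :: "nat \<Rightarrow> nat \<Rightarrow> complex \<Rightarrow> complex" where
  "poly_part d k z = residue (gen_fun d k z) 0"

end

theory Submission
  imports Defs
begin


lemma exp_ne_1:
  fixes t :: complex and c :: real
  assumes "t \<noteq> 0" "c > 0" "norm t < 1 / c"
  shows "1 - exp (- (of_real c) * t) \<noteq> 0"
proof
  assume "1 - exp (- (of_real c) * t) = 0"
  hence "exp (- (of_real c) * t) = 1" by simp
  then obtain m :: int where re: "Re (- (of_real c) * t) = 0" and im: "Im (- (of_real c) * t) = of_int (2 * m) * pi"
    by (auto simp: exp_eq_1)
  have "norm (- (of_real c) * t) < 1" using assms
    by (simp add: norm_mult field_simps)
  hence "\<bar>Im (- (of_real c) * t)\<bar> < 1" using abs_Im_le_cmod by (smt (verit))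
  hence "\<bar>of_int (2 * m) * pi\<bar> < 1" using im by simp
  hence "m = 0"
  proof (rule contrapos_pp)
    assume "m \<noteq> 0"
    hence "\<bar>real_of_int m\<bar> \<ge> 1" by linarith
    hence "\<bar>real_of_int (2 * m) * pi\<bar> \<ge> 2 * pi" by (simp add: abs_mult)
    thus "\<not> \<bar>real_of_int (2 * m) * pi\<bar> < 1" using pi_gt3 by linarith
  qed
  hence "- (of_real c) * t = 0" using re im by (simp add: complex_eq_iff)
  thus False using assms by simp
qed

lemma residue_deriv_zero:
  assumes "r > 0"
    and der: "\<And>t. t \<in> ball 0 r - {0} \<Longrightarrow> (F has_field_derivative F' t) (at t)"
    and hol: "F' holomorphic_on ball 0 r - {0}"
  shows "residue F' 0 = 0"
proof -
  have "(F' has_contour_integral 2 * pi * \<i> * residue F' 0) (circlepath 0 (r/2))"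
    by (rule base_residue[of "ball 0 r"]) (use assms hol in auto)
  moreover have "(F' has_contour_integral 0) (circlepath 0 (r/2))"
  proof (rule Cauchy_theorem_primitive[of "ball 0 r - {0}"])
    fix x :: complex assume "x \<in> ball 0 r - {0}"
    thus "(F has_field_derivative F' x) (at x within ball 0 r - {0})"
      using der has_field_derivative_at_within by blast
  qed (use assms in \<open>auto simp: path_image_circlepath\<close>)
  ultimately have "2 * pi * \<i> * residue F' 0 = 0" using has_contour_integral_unique by blast
  thus ?thesis by simp
qed

lemma residue_sum:
  assumes "open s" "z \<in> s" "finite I" "\<And>i. i \<in> I \<Longrightarrow> f i holomorphic_on s - {z}"
  shows "residue (\<lambda>t. \<Sum>i\<in>I. f i t) z = (\<Sum>i\<in>I. residue (f i) z)"
  using assms(3,4)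
proof (induction I rule: finite_induct)
  case empty
  then show ?case by (simp add: residue_const)
next
  case (insert x F)
  have "residue (\<lambda>t. f x t + (\<Sum>i\<in>F. f i t)) z = residue (f x) z + residue (\<lambda>t. \<Sum>i\<in>F. f i t) z"
    by (rule residue_add[OF assms(1,2)]) (use insert in \<open>auto intro!: holomorphic_intros\<close>)
  then show ?case using insert by simp
qed



definition G :: "real \<Rightarrow> nat \<Rightarrow> complex \<Rightarrow> complex \<Rightarrow> complex" where
  "G c k w t = exp (w * t) / (1 - exp (- (of_real c) * t)) ^ Suc k"

lemma G_holo: assumes "c > 0" shows "G c k w holomorphic_on ball 0 (1/c) - {0}"
  unfolding G_def using exp_ne_1[OF _ assms]
  by (auto intro!: holomorphic_intros)

lemma res_G0: assumes "c > 0" shows "residue (G c 0 w) 0 = 1 / of_real c"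
proof -
  have "residue (\<lambda>t. exp (w * t) / (1 - exp (- (of_real c) * t))) 0 = exp (w * 0) / of_real c"
  proof (rule residue_simple_pole_deriv[where s=UNIV])
    show "((\<lambda>t. 1 - exp (- (of_real c) * t)) has_field_derivative of_real c) (at 0)"
      by (auto intro!: derivative_eq_intros)
  qed (use assms in \<open>auto intro!: holomorphic_intros\<close>)
  thus ?thesis unfolding G_def by simp
qed

lemma res_G: assumes "c > 0"
  shows "residue (G c k w) 0 = 1 / (fact k * of_real c) * (\<Prod>l = 1..k. w / of_real c + of_nat l)"
proof (induction k arbitrary: w)
  case 0
  then show ?case using res_G0[OF assms] by simp
next
  case (Suc k)
  define F where "F = (\<lambda>t. exp ((w + of_real c) * t) / (1 - exp (- (of_real c) * t)) ^ Suc k)"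
  define F' where "F' = (\<lambda>t. (w + of_real c) * G c k (w + of_real c) t - (of_nat (Suc k) * of_real c) * G c (Suc k) w t)"
  have r: "1 / c > 0" using assms by simp
  have r0: "residue F' 0 = 0"
  proof (rule residue_deriv_zero[OF r])
    fix t :: complex assume t: "t \<in> ball 0 (1/c) - {0}"
    hence nz: "1 - exp (- (of_real c) * t) \<noteq> 0" using exp_ne_1[OF _ assms] by auto
    define DD where "DD = ((w + of_real c) * exp ((w + of_real c) * t) * (1 - exp (- (of_real c) * t)) ^ Suc k
         - exp ((w + of_real c) * t) * (of_nat (Suc k) * (1 - exp (- (of_real c) * t)) ^ k * (of_real c * exp (- (of_real c) * t))))
         / ((1 - exp (- (of_real c) * t)) ^ Suc k * (1 - exp (- (of_real c) * t)) ^ Suc k)"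
    have "(F has_field_derivative DD) (at t)"
      unfolding F_def DD_def using nz
      by (auto intro!: derivative_eq_intros simp del: power_Suc)
    moreover have "DD = F' t"
    proof -
      have e: "exp (w * t) = exp ((w + of_real c) * t) * exp (- (of_real c) * t)"
        by (simp add: exp_add[symmetric] algebra_simps)
      have gen: "(a * E * X ^ Suc k - E * (of_nat (Suc k) * X ^ k * (cc * Q))) / (X ^ Suc k * X ^ Suc k)
          = a * (E / X ^ Suc k) - of_nat (Suc k) * cc * (E * Q / X ^ Suc (Suc k))"
        if "X \<noteq> 0" for a E X cc Q :: complex
        using that by (simp add: field_simps power_add[symmetric] del: power_Suc)
      show ?thesis unfolding F'_def G_def DD_def e using gen[OF nz] by simp
    qed
    ultimately show "(F has_field_derivative F' t) (at t)" by simp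
  next
    show "F' holomorphic_on ball 0 (1 / c) - {0}"
      unfolding F'_def using G_holo[OF assms] by (auto intro!: holomorphic_intros)
  qed
  moreover have r1: "residue F' 0 = (w + of_real c) * residue (G c k (w + of_real c)) 0
      - (of_nat (Suc k) * of_real c) * residue (G c (Suc k) w) 0"
    unfolding F'_def
    by (subst residue_diff[of "ball 0 (1/c)"], use G_holo[OF assms] assms in \<open>auto intro!: holomorphic_intros\<close>,
        subst residue_lmul[of "ball 0 (1/c)"], use G_holo[OF assms] assms in \<open>auto\<close>,
        subst residue_lmul[of "ball 0 (1/c)"], use G_holo[OF assms] assms in \<open>auto\<close>)
  ultimately have eq: "residue (G c (Suc k) w) 0 = (w + of_real c) * residue (G c k (w + of_real c)) 0 / (of_nat (Suc k) * of_real c)"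
  proof -
    have nz: "of_nat (Suc k) * (of_real c :: complex) \<noteq> 0" using assms of_nat_neq_0 by (metis mult_eq_0_iff of_real_eq_0_iff less_irrefl)
    have "residue (G c (Suc k) w) 0 * (of_nat (Suc k) * of_real c) = (w + of_real c) * residue (G c k (w + of_real c)) 0"
      using r0 r1 by (simp add: algebra_simps)
    thus ?thesis using nz by (simp add: eq_divide_eq)
  qed
  have p: "(\<Prod>l = 1..Suc k. w / of_real c + of_nat l) = (w / of_real c + 1) * (\<Prod>l = 1..k. (w + of_real c) / of_real c + of_nat l)"
  proof -
    have "(\<Prod>l = 1..Suc k. w / of_real c + of_nat l) = (w / of_real c + 1) * (\<Prod>l = Suc 1..Suc k. w / of_real c + of_nat l)"
      by (simp add: prod.atLeast_Suc_atMost)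
    also have "(\<Prod>l = Suc 1..Suc k. w / of_real c + of_nat l) = (\<Prod>l = 1..k. w / of_real c + of_nat (Suc l))"
      by (rule prod.shift_bounds_cl_Suc_ivl)
    also have "\<dots> = (\<Prod>l = 1..k. (w + of_real c) / of_real c + of_nat l)"
      using assms by (intro prod.cong refl) (simp add: field_simps)
    finally show ?thesis .
  qed
  show ?case unfolding eq Suc p using assms
    by (simp add: field_simps)
qed



lemma geo_part:
  fixes q :: "'a::field"
  assumes "i < k" "d \<ge> 1" "1 - q ^ (d ^ (i + 1)) \<noteq> 0"
  shows "(\<Sum>y\<in>{0..d ^ (k - i) - 1}. q ^ (d ^ (i + 1) * y)) = (1 - q ^ (d ^ (k + 1))) / (1 - q ^ (d ^ (i + 1)))"
proof -
  have pos: "d ^ (k - i) \<ge> 1" using assms by simp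
  have "{0..d ^ (k - i) - 1} = {..<d ^ (k - i)}" using pos by auto
  hence "(\<Sum>y\<in>{0..d ^ (k - i) - 1}. q ^ (d ^ (i + 1) * y)) = (\<Sum>y<d ^ (k - i). (q ^ (d ^ (i + 1))) ^ y)"
    by (simp add: power_mult)
  also have "\<dots> = (1 - (q ^ (d ^ (i + 1))) ^ (d ^ (k - i))) / (1 - q ^ (d ^ (i + 1)))"
    using assms(3) by (subst sum_gp_strict) auto
  also have "(q ^ (d ^ (i + 1))) ^ (d ^ (k - i)) = q ^ (d ^ (k + 1))"
  proof -
    have "i + 1 + (k - i) = k + 1" using assms(1) by simp
    hence "d ^ (i + 1) * d ^ (k - i) = d ^ (k + 1)" by (metis power_add)
    thus ?thesis by (metis power_mult)
  qed
  finally show ?thesis .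
qed

lemma alg_identity:
  fixes q :: "'a::field"
  assumes d: "d \<ge> 1" and nz: "\<And>i. i \<le> k \<Longrightarrow> 1 - q ^ (d ^ (i + 1)) \<noteq> 0"
  shows "(\<Prod>i\<le>k. (1 + q ^ (d ^ i)) / (1 - q ^ (d ^ (i + 1))))
       = (\<Sum>(e, j)\<in>idx d k. q ^ shift d k e j) / (1 - q ^ (d ^ (k + 1))) ^ (k + 1)"
proof -
  define PE where "PE = PiE {..k} (\<lambda>_::nat. {0::nat,1})"
  define PJ where "PJ = PiE {..<k} (\<lambda>i. {0..d ^ (k - i) - 1})"
  define B where "B = 1 - q ^ (d ^ (k + 1))"
  have B: "B \<noteq> 0" using nz[of k] unfolding B_def by simp
  have "(\<Sum>(e, j)\<in>idx d k. q ^ shift d k e j) = (\<Sum>e\<in>PE. \<Sum>j\<in>PJ. (\<Prod>i\<le>k. q ^ (d ^ i * e i)) * (\<Prod>i<k. q ^ (d ^ (i + 1) * j i)))"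
    unfolding idx_def PE_def PJ_def shift_def sum.cartesian_product[symmetric]
    by (simp add: power_add power_sum mult.commute)
  also have "\<dots> = (\<Sum>e\<in>PE. \<Prod>i\<le>k. q ^ (d ^ i * e i)) * (\<Sum>j\<in>PJ. \<Prod>i<k. q ^ (d ^ (i + 1) * j i))"
    by (simp add: sum_product)
  also have "(\<Sum>e\<in>PE. \<Prod>i\<le>k. q ^ (d ^ i * e i)) = (\<Prod>i\<le>k. \<Sum>y\<in>{0::nat,1}. q ^ (d ^ i * y))"
    unfolding PE_def by (rule prod_sum_PiE[symmetric]) auto
  also have "\<dots> = (\<Prod>i\<le>k. 1 + q ^ (d ^ i))" by simp
  also have "(\<Sum>j\<in>PJ. \<Prod>i<k. q ^ (d ^ (i + 1) * j i)) = (\<Prod>i<k. \<Sum>y\<in>{0..d ^ (k - i) - 1}. q ^ (d ^ (i + 1) * y))"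
    unfolding PJ_def by (rule prod_sum_PiE[symmetric]) auto
  also have "\<dots> = (\<Prod>i<k. B / (1 - q ^ (d ^ (i + 1))))"
    unfolding B_def using nz d by (intro prod.cong refl geo_part) auto
  also have "\<dots> = B ^ k / (\<Prod>i<k. (1 - q ^ (d ^ (i + 1))))"
    by (simp add: prod_dividef)
  finally have S: "(\<Sum>(e, j)\<in>idx d k. q ^ shift d k e j) = (\<Prod>i\<le>k. 1 + q ^ (d ^ i)) * (B ^ k / (\<Prod>i<k. (1 - q ^ (d ^ (i + 1)))))" .
  have P: "(\<Prod>i\<le>k. (1 - q ^ (d ^ (i + 1)))) = (\<Prod>i<k. (1 - q ^ (d ^ (i + 1)))) * B"
    unfolding B_def by (simp add: lessThan_Suc_atMost[symmetric])
  have Pnz: "(\<Prod>i<k. (1 - q ^ (d ^ (i + 1)))) \<noteq> 0" using nz by (simp add: prod_zero_iff)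
  define A where "A = (\<Prod>i\<le>k. 1 + q ^ (d ^ i))"
  define PP where "PP = (\<Prod>i<k. (1 - q ^ (d ^ (i + 1))))"
  have "(\<Prod>i\<le>k. (1 + q ^ (d ^ i)) / (1 - q ^ (d ^ (i + 1)))) = A / (\<Prod>i\<le>k. (1 - q ^ (d ^ (i + 1))))"
    unfolding A_def by (rule prod_dividef)
  also have "\<dots> = A / (PP * B)" unfolding PP_def P ..
  also have "\<dots> = A * (B ^ k / PP) / B ^ (k + 1)"
    using B Pnz unfolding PP_def[symmetric] by (simp add: field_simps)
  finally show ?thesis unfolding S B_def[symmetric] A_def PP_def .
qed



lemma gen_fun_expand:
  assumes d: "d \<ge> 1" and t: "t \<noteq> 0" "norm t < 1 / real (d ^ (k + 1))"
  shows "gen_fun d k z t = (\<Sum>(e, j)\<in>idx d k. G (real (d ^ (k + 1))) k (z - of_nat (shift d k e j)) t)"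
proof -
  define q where "q = exp (- t)"
  have ex: "exp (- (of_nat m) * t) = q ^ m" for m
    unfolding q_def by (metis exp_of_nat_mult mult_minus_left mult_minus_right)
  have nz: "1 - q ^ (d ^ (i + 1)) \<noteq> 0" if "i \<le> k" for i
  proof -
    have le: "real (d ^ (i + 1)) \<le> real (d ^ (k + 1))" using that d
      by (simp add: power_increasing)
    have pos: "real (d ^ (i + 1)) > 0" using d by simp
    have "norm t < 1 / real (d ^ (i + 1))"
      using t(2) le pos by (smt (verit) frac_le zero_less_divide_1_iff)
    from exp_ne_1[OF t(1) pos this] show ?thesis by (simp add: ex[symmetric])
  qed
  have "gen_fun d k z t = exp (z * t) * (\<Prod>i\<le>k. (1 + q ^ (d ^ i)) / (1 - q ^ (d ^ (i + 1))))"
    unfolding gen_fun_def ex ..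
  also have "\<dots> = exp (z * t) * ((\<Sum>(e, j)\<in>idx d k. q ^ shift d k e j) / (1 - q ^ (d ^ (k + 1))) ^ (k + 1))"
    using alg_identity[OF d nz] by simp
  also have "\<dots> = (\<Sum>(e, j)\<in>idx d k. exp (z * t) * q ^ shift d k e j / (1 - q ^ (d ^ (k + 1))) ^ (k + 1))"
    by (simp add: sum_distrib_left sum_divide_distrib case_prod_unfold)
  also have "\<dots> = (\<Sum>(e, j)\<in>idx d k. G (real (d ^ (k + 1))) k (z - of_nat (shift d k e j)) t)"
  proof (intro sum.cong refl, clarify)
    fix e j
    have "exp ((z - of_nat (shift d k e j)) * t) = exp (z * t) * q ^ shift d k e j"
      by (simp add: ex[symmetric] exp_add[symmetric] algebra_simps)
    moreover have "exp (- complex_of_real (real (d ^ (k + 1))) * t) = q ^ (d ^ (k + 1))"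
      using ex[of "d ^ (k + 1)"] by simp
    ultimately show "exp (z * t) * q ^ shift d k e j / (1 - q ^ d ^ (k + 1)) ^ (k + 1) =
         G (real (d ^ (k + 1))) k (z - of_nat (shift d k e j)) t"
      unfolding G_def by simp
  qed
  finally show ?thesis .
qed

lemma part2:
  assumes d: "d \<ge> 1"
  shows "poly_part d k z =
           1 / (fact k * of_nat d ^ (k + 1)) * (\<Sum>(e, j) \<in> idx d k.
              \<Prod>l = 1..k. ((z - of_nat (shift d k e j)) / of_nat d ^ (k + 1) + of_nat l))"
proof -
  define c where "c = real (d ^ (k + 1))"
  have c: "c > 0" unfolding c_def using d by simp
  have fin: "finite (idx d k)" unfolding idx_def by (auto intro!: finite_PiE)
  have "poly_part d k z = residue (\<lambda>t. \<Sum>p\<in>idx d k. G c k (z - of_nat (shift d k (fst p) (snd p))) t) 0"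
    unfolding poly_part_def
  proof (rule residue_cong)
    show "\<forall>\<^sub>F t in at 0. gen_fun d k z t = (\<Sum>p\<in>idx d k. G c k (z - of_nat (shift d k (fst p) (snd p))) t)"
      unfolding eventually_at
      by (rule exI[of _ "1 / c"]) (use c gen_fun_expand[OF d] in \<open>auto simp: c_def case_prod_unfold\<close>)
  qed simp
  also have "\<dots> = (\<Sum>p\<in>idx d k. residue (G c k (z - of_nat (shift d k (fst p) (snd p)))) 0)"
    by (rule residue_sum[of "ball 0 (1/c)"]) (use c fin G_holo[OF c] in auto)
  also have "\<dots> = (\<Sum>p\<in>idx d k. 1 / (fact k * of_real c) * (\<Prod>l = 1..k. (z - of_nat (shift d k (fst p) (snd p))) / of_real c + of_nat l))"
    using res_G[OF c] by simp
  also have "\<dots> = 1 / (fact k * of_nat d ^ (k + 1)) * (\<Sum>(e, j) \<in> idx d k.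
              \<Prod>l = 1..k. ((z - of_nat (shift d k e j)) / of_nat d ^ (k + 1) + of_nat l))"
    unfolding c_def by (simp add: sum_distrib_left case_prod_unfold)
  finally show ?thesis .
qed



lemma binom_prod: "real ((N + k) choose k) = (\<Prod>l = 1..k. (real N + real l)) / fact k"
proof (induction k)
  case 0
  then show ?case by simp
next
  case (Suc k)
  have "Suc (N + k) * ((N + k) choose k) = (Suc (N + k) choose Suc k) * Suc k"
    by (rule Suc_times_binomial_eq)
  hence "real ((N + Suc k) choose Suc k) = real ((N + k) choose k) * (real N + real (Suc k)) / real (Suc k)"
    by (simp add: field_simps) (metis of_nat_add of_nat_mult of_nat_Suc add_Suc_right)
  also have "\<dots> = (\<Prod>l = 1..Suc k. (real N + real l)) / fact (Suc k)"
    unfolding Suc by (simp add: prod.cl_ivl_Suc field_simps)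
  finally show ?case .
qed

definition Tset :: "nat \<Rightarrow> nat \<Rightarrow> (nat \<Rightarrow> nat) set" where
  "Tset k N = {a. (\<forall>i>k. a i = 0) \<and> (\<Sum>i\<le>k. a i) = N}"

lemma Tset_card: "finite (Tset k N) \<and> card (Tset k N) = (N + k) choose k"
proof -
  define L where "L = {l::nat list. size l = Suc k \<and> sum_list l = N}"
  have cL: "card L = (N + k) choose k"
    unfolding L_def card_length_sum_list by (simp add: binomial_symmetric[of N "N + k", simplified])
  have fL: "finite L" using cL by (metis card.infinite zero_less_binomial_iff le_add2 not_less0 gr0I)
  have bij: "bij_betw (\<lambda>a. map a [0..<Suc k]) (Tset k N) L"
  proof (rule bij_betw_byWitness[where f'="\<lambda>l i. if i \<le> k then l ! i else 0"])
    show "\<forall>a\<in>Tset k N. (\<lambda>i. if i \<le> k then map a [0..<Suc k] ! i else 0) = a"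
      unfolding Tset_def by (auto simp: fun_eq_iff nth_map_upt less_Suc_eq_le simp del: upt_Suc)
    show "\<forall>l\<in>L. map (\<lambda>i. if i \<le> k then l ! i else 0) [0..<Suc k] = l"
      unfolding L_def by (auto intro!: nth_equalityI simp del: upt_Suc)
    show "(\<lambda>a. map a [0..<Suc k]) ` Tset k N \<subseteq> L"
      unfolding Tset_def L_def
      by (auto simp: sum_set_upt_conv_sum_list_nat[symmetric] atLeast0LessThan lessThan_Suc_atMost simp del: upt_Suc)
    show "(\<lambda>l i. if i \<le> k then l ! i else 0) ` L \<subseteq> Tset k N"
    proof
      fix a assume "a \<in> (\<lambda>l i. if i \<le> k then l ! i else 0) ` L"
      then obtain l where l: "l \<in> L" and a: "a = (\<lambda>i. if i \<le> k then l ! i else 0)" by auto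
      have "map a [0..<Suc k] = l" using l unfolding L_def a by (auto intro!: nth_equalityI simp del: upt_Suc)
      hence "(\<Sum>i\<le>k. a i) = sum_list l"
        by (metis atLeast0LessThan lessThan_Suc_atMost set_upt sum_set_upt_conv_sum_list_nat)
      thus "a \<in> Tset k N" using l unfolding Tset_def L_def a by auto
    qed
  qed
  show ?thesis using bij fL cL bij_betw_finite bij_betw_same_card by metis
qed



definition Phi :: "nat \<Rightarrow> nat \<Rightarrow> (nat \<Rightarrow> nat) \<Rightarrow> (nat \<Rightarrow> nat) \<Rightarrow> (nat \<Rightarrow> nat) \<Rightarrow> nat \<Rightarrow> nat" where
  "Phi d k e j a = (\<lambda>i. if i \<le> k then d * (d ^ (k - i) * a i + (if i < k then j i else 0)) + e i else 0)"

lemma sum_Phi: "(\<Sum>i\<le>k. d ^ i * Phi d k e j a i) = shift d k e j + d ^ (k + 1) * (\<Sum>i\<le>k. a i)"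
proof -
  have "(\<Sum>i\<le>k. d ^ i * Phi d k e j a i) =
        (\<Sum>i\<le>k. d ^ (k + 1) * a i + d ^ (i + 1) * (if i < k then j i else 0) + d ^ i * e i)"
  proof (intro sum.cong refl)
    fix i assume "i \<in> {..k}"
    hence "i + 1 + (k - i) = k + 1" by simp
    hence p: "d ^ i * d * d ^ (k - i) = d ^ (k + 1)" by (metis power_add power_Suc2 Suc_eq_plus1)
    have "d ^ i * Phi d k e j a i = d ^ i * d * d ^ (k - i) * a i + d ^ (i + 1) * (if i < k then j i else 0) + d ^ i * e i"
      using \<open>i \<in> {..k}\<close> unfolding Phi_def by (simp add: algebra_simps)
    thus "d ^ i * Phi d k e j a i = d ^ (k + 1) * a i + d ^ (i + 1) * (if i < k then j i else 0) + d ^ i * e i"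
      unfolding p .
  qed
  also have "\<dots> = d ^ (k + 1) * (\<Sum>i\<le>k. a i) + (\<Sum>i\<le>k. d ^ (i + 1) * (if i < k then j i else 0)) + (\<Sum>i\<le>k. d ^ i * e i)"
    by (simp add: sum.distrib sum_distrib_left)
  also have "(\<Sum>i\<le>k. d ^ (i + 1) * (if i < k then j i else 0)) = (\<Sum>i<k. d ^ (i + 1) * j i)"
    by (simp add: lessThan_Suc_atMost[symmetric])
  finally show ?thesis unfolding shift_def by simp
qed

definition Xset :: "nat \<Rightarrow> nat \<Rightarrow> nat \<Rightarrow> (nat \<Rightarrow> nat) set" where
  "Xset d k n = {x :: nat \<Rightarrow> nat. (\<forall>i>k. x i = 0) \<and>
      (\<Sum>i\<le>k. d ^ i * x i) = n \<and> (\<forall>i\<le>k. x i mod d = 0 \<or> x i mod d = 1)}"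

definition Aset :: "nat \<Rightarrow> nat \<Rightarrow> nat \<Rightarrow> (nat \<Rightarrow> nat) \<Rightarrow> (nat \<Rightarrow> nat) \<Rightarrow> (nat \<Rightarrow> nat) set" where
  "Aset d k n e j = {a. (\<forall>i>k. a i = 0) \<and> shift d k e j + d ^ (k + 1) * (\<Sum>i\<le>k. a i) = n}"

definition Psi :: "nat \<Rightarrow> nat \<Rightarrow> (nat \<Rightarrow> nat) \<Rightarrow> ((nat \<Rightarrow> nat) \<times> (nat \<Rightarrow> nat)) \<times> (nat \<Rightarrow> nat)" where
  "Psi d k x = ((restrict (\<lambda>i. x i mod d) {..k}, restrict (\<lambda>i. (x i div d) mod d ^ (k - i)) {..<k}),
                 (\<lambda>i. if i \<le> k then (x i div d) div d ^ (k - i) else 0))"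

lemma Phi_Psi:
  assumes "d \<ge> 2" "\<forall>i>k. x i = 0"
  shows "Phi d k (fst (fst (Psi d k x))) (snd (fst (Psi d k x))) (snd (Psi d k x)) = x"
proof
  fix i
  show "Phi d k (fst (fst (Psi d k x))) (snd (fst (Psi d k x))) (snd (Psi d k x)) i = x i"
  proof (cases "i \<le> k")
    case True
    have "d ^ (k - i) * (x i div d div d ^ (k - i)) + (if i < k then x i div d mod d ^ (k - i) else 0) = x i div d"
      using True by (cases "i < k") auto
    hence "d * (d ^ (k - i) * (x i div d div d ^ (k - i)) + (if i < k then x i div d mod d ^ (k - i) else 0)) + x i mod d = x i"
      by simp
    thus ?thesis using True unfolding Phi_def Psi_def by simp
  next
    case False
    thus ?thesis using assms unfolding Phi_def Psi_def by simp
  qed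
qed

lemma Psi_Phi:
  assumes "d \<ge> 2" "(e, j) \<in> idx d k" "\<forall>i>k. a i = 0"
  shows "Psi d k (Phi d k e j a) = ((e, j), a)"
proof -
  from assms(2) have e: "e \<in> PiE {..k} (\<lambda>_. {0,1})" and j: "j \<in> PiE {..<k} (\<lambda>i. {0..d ^ (k - i) - 1})"
    unfolding idx_def by auto
  have pos: "d ^ (k - i) > 0" for i using assms(1) by simp
  have emod: "e i < d" if "i \<le> k" for i using e that assms(1) by (force simp: PiE_iff)
  have jlt: "j i < d ^ (k - i)" if "i < k" for i
  proof -
    have "j i \<in> {0..d ^ (k - i) - 1}" using j that by (auto simp: PiE_iff)
    hence "j i \<le> d ^ (k - i) - 1" by simp
    thus ?thesis using pos[of i] by linarith
  qed
  have m: "Phi d k e j a i mod d = e i" "Phi d k e j a i div d = d ^ (k - i) * a i + (if i < k then j i else 0)"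
    if "i \<le> k" for i
    using that emod[OF that] assms(1) unfolding Phi_def by auto
  have "restrict (\<lambda>i. Phi d k e j a i mod d) {..k} = e"
    using e m(1) by (auto simp: fun_eq_iff PiE_iff extensional_def)
  moreover have "restrict (\<lambda>i. (Phi d k e j a i div d) mod d ^ (k - i)) {..<k} = j"
    using j m(2) jlt by (auto simp: fun_eq_iff PiE_iff extensional_def)
  moreover have "(\<lambda>i. if i \<le> k then (Phi d k e j a i div d) div d ^ (k - i) else 0) = a"
  proof
    fix i show "(if i \<le> k then (Phi d k e j a i div d) div d ^ (k - i) else 0) = a i"
      using m(2)[of i] jlt[of i] pos[of i] assms(3)
      by (cases "i < k"; cases "i = k") auto
  qed
  ultimately show ?thesis unfolding Psi_def by simp
qed



lemma card_X:
  assumes d: "d \<ge> 2"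
  shows "card (Xset d k n) = (\<Sum>p\<in>idx d k. card (Aset d k n (fst p) (snd p)))"
proof -
  define S where "S = (SIGMA p:idx d k. Aset d k n (fst p) (snd p))"
  define f where "f = (\<lambda>q :: ((nat \<Rightarrow> nat) \<times> (nat \<Rightarrow> nat)) \<times> (nat \<Rightarrow> nat). Phi d k (fst (fst q)) (snd (fst q)) (snd q))"
  have bij: "bij_betw f S (Xset d k n)"
  proof (rule bij_betw_byWitness[where f'="Psi d k"])
    show "\<forall>q\<in>S. Psi d k (f q) = q"
      unfolding S_def f_def Aset_def using Psi_Phi[OF d] by auto
    show "\<forall>x\<in>Xset d k n. f (Psi d k x) = x"
      unfolding Xset_def f_def using Phi_Psi[OF d] by auto
    show "f ` S \<subseteq> Xset d k n"
    proof clarify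
      fix e j a assume "((e, j), a) \<in> S"
      hence ej: "(e, j) \<in> idx d k" and a: "\<forall>i>k. a i = 0" "shift d k e j + d ^ (k + 1) * (\<Sum>i\<le>k. a i) = n"
        unfolding S_def Aset_def by auto
      have e01: "e i = 0 \<or> e i = 1" if "i \<le> k" for i using ej that unfolding idx_def by (auto simp: PiE_iff)
      have "Phi d k e j a i mod d = e i" if "i \<le> k" for i
        using that e01[OF that] d unfolding Phi_def by auto
      thus "f ((e, j), a) \<in> Xset d k n"
        unfolding Xset_def f_def using sum_Phi[of d k e j a] a e01 by (auto simp: Phi_def)
    qed
    show "Psi d k ` Xset d k n \<subseteq> S"
    proof (rule image_subsetI)
      fix x assume x: "x \<in> Xset d k n"
      obtain e j a where P: "Psi d k x = ((e, j), a)" by (metis prod.collapse)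
      have sx: "\<forall>i>k. x i = 0" "(\<Sum>i\<le>k. d ^ i * x i) = n" "\<forall>i\<le>k. x i mod d = 0 \<or> x i mod d = 1"
        using x unfolding Xset_def by auto
      have e: "e = restrict (\<lambda>i. x i mod d) {..k}" and j: "j = restrict (\<lambda>i. (x i div d) mod d ^ (k - i)) {..<k}"
        and a: "a = (\<lambda>i. if i \<le> k then (x i div d) div d ^ (k - i) else 0)"
        using P unfolding Psi_def by auto
      have "(e, j) \<in> idx d k"
      proof -
        have "e \<in> PiE {..k} (\<lambda>_. {0,1})" unfolding e using sx(3) by auto
        moreover have "j \<in> PiE {..<k} (\<lambda>i. {0..d ^ (k - i) - 1})"
        proof -
          have "(x i div d) mod d ^ (k - i) \<le> d ^ (k - i) - 1" for i
          proof -
            have "d ^ (k - i) > 0" using d by simp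
            hence "(x i div d) mod d ^ (k - i) < d ^ (k - i)" by simp
            thus ?thesis by linarith
          qed
          thus ?thesis unfolding j by auto
        qed
        ultimately show ?thesis unfolding idx_def by auto
      qed
      moreover have "a \<in> Aset d k n e j"
      proof -
        have "Phi d k e j a = x" using Phi_Psi[OF d sx(1)] P by simp
        hence "shift d k e j + d ^ (k + 1) * (\<Sum>i\<le>k. a i) = n" using sum_Phi[of d k e j a] sx(2) by simp
        thus ?thesis unfolding Aset_def a by auto
      qed
      ultimately show "Psi d k x \<in> S" unfolding S_def P by auto
    qed
  qed
  have A: "Aset d k n e j = (if shift d k e j \<le> n \<and> d ^ (k + 1) dvd (n - shift d k e j)
            then Tset k ((n - shift d k e j) div d ^ (k + 1)) else {})" for e j
  proof -
    have D: "d ^ (k + 1) > 0" using d by simp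
    show ?thesis
    proof (cases "shift d k e j \<le> n \<and> d ^ (k + 1) dvd (n - shift d k e j)")
      case True
      then obtain N where N: "n - shift d k e j = d ^ (k + 1) * N" by blast
      have "(n - shift d k e j) div d ^ (k + 1) = N" using N D by simp
      moreover have "shift d k e j + d ^ (k + 1) * s = n \<longleftrightarrow> s = N" for s
        using True N D by (auto simp: algebra_simps)
      ultimately show ?thesis using True unfolding Aset_def Tset_def by auto
    next
      case False
      have "shift d k e j + d ^ (k + 1) * s \<noteq> n" for s
      proof
        assume "shift d k e j + d ^ (k + 1) * s = n"
        hence "shift d k e j \<le> n \<and> n - shift d k e j = d ^ (k + 1) * s" by auto
        thus False using False by auto
      qed
      thus ?thesis using False unfolding Aset_def by auto
    qed
  qed
  have fin: "finite (idx d k)" unfolding idx_def by (auto intro!: finite_PiE)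
  have "card (Xset d k n) = card S" using bij bij_betw_same_card by metis
  also have "\<dots> = (\<Sum>p\<in>idx d k. card (Aset d k n (fst p) (snd p)))"
    unfolding S_def by (rule card_SigmaI[OF fin]) (use Tset_card A in auto)
  finally show ?thesis .
qed

lemma card_A:
  assumes d: "d \<ge> 2"
  shows "card (Aset d k n e j) = (if shift d k e j \<le> n \<and> shift d k e j mod d ^ (k + 1) = n mod d ^ (k + 1)
            then ((n - shift d k e j) div d ^ (k + 1) + k) choose k else 0)"
proof (cases "shift d k e j \<le> n \<and> shift d k e j mod d ^ (k + 1) = n mod d ^ (k + 1)")
  case True
  then obtain N where N: "n - shift d k e j = d ^ (k + 1) * N"
    using mod_eq_dvd_iff_nat[of "shift d k e j" n] by (metis dvd_def)
  have D: "d ^ (k + 1) > 0" using d by simp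
  have "(n - shift d k e j) div d ^ (k + 1) = N" using N D by simp
  moreover have "shift d k e j + d ^ (k + 1) * s = n \<longleftrightarrow> s = N" for s
    using True N D by (auto simp: algebra_simps)
  ultimately have "Aset d k n e j = Tset k ((n - shift d k e j) div d ^ (k + 1))"
    unfolding Aset_def Tset_def by auto
  thus ?thesis using True Tset_card by simp
next
  case False
  have "shift d k e j + d ^ (k + 1) * s \<noteq> n" for s
  proof
    assume h: "shift d k e j + d ^ (k + 1) * s = n"
    hence "shift d k e j \<le> n" by auto
    moreover have "n mod d ^ (k + 1) = shift d k e j mod d ^ (k + 1)" using h[symmetric] by simp
    ultimately show False using False by auto
  qed
  hence "Aset d k n e j = {}" unfolding Aset_def by auto
  thus ?thesis using False by simp
qed



lemma shift_bound:
  assumes d: "d \<ge> 1" and ej: "(e, j) \<in> idx d k"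
  shows "shift d k e j \<le> k * d ^ (k + 1) + 1"
proof -
  have e01: "e i \<le> 1" if "i \<le> k" for i using ej that unfolding idx_def by (force simp: PiE_iff)
  have jle: "j i + 1 \<le> d ^ (k - i)" if "i < k" for i
  proof -
    have "j i \<in> {0..d ^ (k - i) - 1}" using ej that unfolding idx_def by (auto simp: PiE_iff)
    moreover have "d ^ (k - i) \<ge> 1" using d by simp
    ultimately show ?thesis by auto
  qed
  define P where "P = (\<Sum>i<k. d ^ (i + 1))"
  have "(\<Sum>i<k. d ^ (i + 1) * j i) + P = (\<Sum>i<k. d ^ (i + 1) * (j i + 1))"
    unfolding P_def by (simp add: sum.distrib algebra_simps)
  also have "\<dots> \<le> (\<Sum>i<k. d ^ (i + 1) * d ^ (k - i))"
    using jle by (intro sum_mono mult_le_mono2) auto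
  also have "\<dots> = (\<Sum>i<k. d ^ (k + 1))"
  proof (intro sum.cong refl)
    fix i assume "i \<in> {..<k}"
    hence "i + 1 + (k - i) = k + 1" by simp
    thus "d ^ (i + 1) * d ^ (k - i) = d ^ (k + 1)" by (metis power_add)
  qed
  finally have J: "(\<Sum>i<k. d ^ (i + 1) * j i) + P \<le> k * d ^ (k + 1)" by simp
  have "(\<Sum>i\<le>k. d ^ i * e i) \<le> (\<Sum>i\<le>k. d ^ i)"
    using e01 by (intro sum_mono) (simp add: mult_le_cancel1 )
  also have "\<dots> = 1 + P" unfolding P_def
    by (simp add: lessThan_Suc_atMost[symmetric] sum.lessThan_Suc_shift del: sum.lessThan_Suc)
  finally have E: "(\<Sum>i\<le>k. d ^ i * e i) \<le> 1 + P" .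
  show ?thesis unfolding shift_def using J E by linarith
qed

lemma term_eq:
  assumes d: "d \<ge> 2" and n: "d ^ k \<le> n" and s: "s \<le> k * d ^ (k + 1) + 1"
    and m: "s mod d ^ (k + 1) = n mod d ^ (k + 1)"
  shows "real (if s \<le> n then ((n - s) div d ^ (k + 1) + k) choose k else 0)
       = 1 / fact k * (\<Prod>l = 1..k. ((real n - real s) / real d ^ (k + 1) + real l))"
proof (cases "s \<le> n")
  case True
  then obtain N where N: "n - s = d ^ (k + 1) * N"
    using mod_eq_dvd_iff_nat[of s n] m by (metis dvd_def)
  have D: "d ^ (k + 1) > 0" using d by simp
  have "(n - s) div d ^ (k + 1) = N" using N D by simp
  moreover have "(real n - real s) / real d ^ (k + 1) = real N"
  proof -
    have "real n - real s = real (n - s)" using True by simp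
    also have "\<dots> = real d ^ (k + 1) * real N" unfolding N by simp
    finally show ?thesis using D by simp
  qed
  ultimately show ?thesis using True binom_prod[of N k] by simp
next
  case False
  have "d ^ (k + 1) dvd s - n" using mod_eq_dvd_iff_nat[of n s] m False by simp
  then obtain M where M: "s - n = d ^ (k + 1) * M" by (metis dvd_def)
  have D: "d ^ (k + 1) > 0" using d by simp
  have "d ^ k \<ge> 1" using d by simp
  hence "s - n \<le> k * d ^ (k + 1)" using s n by linarith
  hence "d ^ (k + 1) * M \<le> d ^ (k + 1) * k" using M by (simp add: mult.commute)
  hence Mk: "M \<le> k" using D nat_mult_le_cancel1 by blast
  have "M \<ge> 1" using M False by (cases M) auto
  have q: "(real n - real s) / real d ^ (k + 1) = - real M"
  proof -
    have "real s - real n = real (s - n)" using False by simp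
    also have "\<dots> = real d ^ (k + 1) * real M" unfolding M by simp
    finally show ?thesis using D by (simp add: field_simps)
  qed
  have "(\<Prod>l = 1..k. ((real n - real s) / real d ^ (k + 1) + real l)) = 0"
    unfolding q by (rule prod_zero) (use Mk \<open>M \<ge> 1\<close> in auto)
  thus ?thesis using False by simp
qed

lemma part1:
  assumes d: "d \<ge> 2" and n: "d ^ k \<le> n"
  shows "real (pdd d k n) =
           1 / fact k * (\<Sum>(e, j) \<in> {(e, j) \<in> idx d k. shift d k e j mod d ^ (k + 1) = n mod d ^ (k + 1)}.
              \<Prod>l = 1..k. ((real n - real (shift d k e j)) / real d ^ (k + 1) + real l))"
proof -
  have fin: "finite (idx d k)" unfolding idx_def by (auto intro!: finite_PiE)
  define Q where "Q = (\<lambda>p. shift d k (fst p) (snd p) mod d ^ (k + 1) = n mod d ^ (k + 1))"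
  define T where "T = (\<lambda>p. real (if shift d k (fst p) (snd p) \<le> n then ((n - shift d k (fst p) (snd p)) div d ^ (k + 1) + k) choose k else 0))"
  have set_eq: "{(e, j) \<in> idx d k. shift d k e j mod d ^ (k + 1) = n mod d ^ (k + 1)} = {p \<in> idx d k. Q p}"
    unfolding Q_def by auto
  have "pdd d k n = card (Xset d k n)" unfolding pdd_def Xset_def ..
  also have "\<dots> = (\<Sum>p\<in>idx d k. card (Aset d k n (fst p) (snd p)))" by (rule card_X[OF d])
  finally have "real (pdd d k n) = (\<Sum>p\<in>idx d k. real (card (Aset d k n (fst p) (snd p))))"
    by (simp only: of_nat_sum)
  also have "\<dots> = (\<Sum>p\<in>idx d k. if Q p then T p else 0)"
    by (intro sum.cong refl) (simp add: card_A[OF d] Q_def T_def)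
  also have "\<dots> = (\<Sum>p\<in>{p \<in> idx d k. Q p}. T p)"
    by (rule sum.inter_filter[OF fin, symmetric])
  also have "\<dots> = (\<Sum>p\<in>{p \<in> idx d k. Q p}. 1 / fact k * (\<Prod>l = 1..k. ((real n - real (shift d k (fst p) (snd p))) / real d ^ (k + 1) + real l)))"
  proof (intro sum.cong refl)
    fix p assume p: "p \<in> {p \<in> idx d k. Q p}"
    obtain e j where pe: "p = (e, j)" by (metis prod.collapse)
    show "T p = 1 / fact k * (\<Prod>l = 1..k. ((real n - real (shift d k (fst p) (snd p))) / real d ^ (k + 1) + real l))"
      unfolding T_def using term_eq[OF d n shift_bound[of d e j k]] p d unfolding pe Q_def by auto
  qed
  also have "\<dots> = 1 / fact k * (\<Sum>(e, j) \<in> {(e, j) \<in> idx d k. shift d k e j mod d ^ (k + 1) = n mod d ^ (k + 1)}.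
              \<Prod>l = 1..k. ((real n - real (shift d k e j)) / real d ^ (k + 1) + real l))"
    unfolding set_eq by (simp add: sum_distrib_left case_prod_unfold)
  finally show ?thesis .
qed


theorem corollary2p4:
  fixes d n k :: nat
  assumes "d \<ge> 2" and "n \<ge> 1" and "int k \<le> \<lfloor>log (real d) (real n)\<rfloor>"
  shows "real (pdd d k n) =
           1 / fact k * (\<Sum>(e, j) \<in> {(e, j) \<in> idx d k. shift d k e j mod d ^ (k + 1) = n mod d ^ (k + 1)}.
              \<Prod>l = 1..k. ((real n - real (shift d k e j)) / real d ^ (k + 1) + real l)) \<and>
         (\<forall>z :: complex. poly_part d k z =
           1 / (fact k * of_nat d ^ (k + 1)) * (\<Sum>(e, j) \<in> idx d k.
              \<Prod>l = 1..k. ((z - of_nat (shift d k e j)) / of_nat d ^ (k + 1) + of_nat l)))"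
proof
  have "real k \<le> log (real d) (real n)" using assms(3) by (simp add: le_floor_iff)
  hence "real d powr real k \<le> real n" using assms(1,2) by (subst (asm) le_log_iff) auto
  hence "real d ^ k \<le> real n" using assms(1) by (simp add: powr_realpow)
  hence dn: "d ^ k \<le> n" by (metis of_nat_le_iff of_nat_power)
  show "real (pdd d k n) =
           1 / fact k * (\<Sum>(e, j) \<in> {(e, j) \<in> idx d k. shift d k e j mod d ^ (k + 1) = n mod d ^ (k + 1)}.
              \<Prod>l = 1..k. ((real n - real (shift d k e j)) / real d ^ (k + 1) + real l))"
    by (rule part1[OF assms(1) dn])
  show "\<forall>z :: complex. poly_part d k z =
           1 / (fact k * of_nat d ^ (k + 1)) * (\<Sum>(e, j) \<in> idx d k.
              \<Prod>l = 1..k. ((z - of_nat (shift d k e j)) / of_nat d ^ (k + 1) + of_nat l))"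
    using part2[of d k] assms(1) by auto
qed

end
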